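(* Let $\{|k\rangle\}_{k=1}^n$ be an orthonormal basis of $\mathbb{C}^n$ and let $$\tilde{\mathcal{L}}(\rho)=-i[H,\rho]+\sum_a\Big(M^a\rho M^{a\dagger}-\tfrac12\{M^{a\dagger}M^a,\rho\}\Big)$$ be a Lindblad generator, with $H$ self-adjoint and $M^a$ arbitrary $n\times n$ matrices (finitely many). Suppose $\tilde{\mathcal{L}}(|i\rangle\langle i|)=0$ for every $i$. Then $H$ and all $M^a$ are diagonal in the basis $\{|k\rangle\}$; writing $M^a=\sum_k n^a_k|k\rangle\langle k|$ and $H=\sum_k h_k|k\rangle\langle k|$, one has for all $i\neq j$ $$\tilde{\mathcal{L}}(|i\rangle\langle j|)=-D_{ij}\,|i\rangle\langle j|,\qquad D_{ij}=\tfrac12\sum_a\big(|n^a_i|^2+|n^a_j|^2-2n^a_i\bar n^a_j\big)+i(h_i-h_j).$$ In particular, a Lindblad generator that couples only phases to phases does not mix distinct phases.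
   Context: For a density matrix $\rho$, the off-diagonal entries $\langle i|\rho|j\rangle$, $i\neq j$, are called phases and the diagonal entries probabilities. *)

theory Defs
  imports "HOL-Analysis.Analysis"
begin

text \<open>n x n complex matrices are rendered as complex^'n^'n, with 'n a finite index type
  (so n = CARD('n)).\<close>

definition cscale :: "complex \<Rightarrow> complex^'n^'m \<Rightarrow> complex^'n^'m" where
  "cscale c X = (\<chi> i j. c * X$i$j)"

definition cadj :: "complex^'n^'m \<Rightarrow> complex^'m^'n" where
  "cadj X = (\<chi> i j. cnj (X$j$i))"

definition cinner :: "complex^'n \<Rightarrow> complex^'n \<Rightarrow> complex" where
  "cinner u v = (\<Sum>k\<in>UNIV. cnj (u$k) * v$k)"

definition ketbra :: "complex^'n \<Rightarrow> complex^'n \<Rightarrow> complex^'n^'n" where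
  "ketbra u v = (\<chi> i j. u$i * cnj (v$j))"

definition commutator :: "complex^'n^'n \<Rightarrow> complex^'n^'n \<Rightarrow> complex^'n^'n" where
  "commutator X Y = X ** Y - Y ** X"

definition anticommutator :: "complex^'n^'n \<Rightarrow> complex^'n^'n \<Rightarrow> complex^'n^'n" where
  "anticommutator X Y = X ** Y + Y ** X"

definition lindblad ::
  "complex^'n^'n \<Rightarrow> 'a set \<Rightarrow> ('a \<Rightarrow> complex^'n^'n) \<Rightarrow> complex^'n^'n \<Rightarrow> complex^'n^'n" where
  "lindblad H A M \<rho> =
     cscale (- \<i>) (commutator H \<rho>)
     + (\<Sum>a\<in>A. M a ** \<rho> ** cadj (M a)
                 - cscale (1/2) (anticommutator (cadj (M a) ** M a) \<rho>))"

definition orthonormal_basis :: "('n::finite \<Rightarrow> complex^'n) \<Rightarrow> bool" where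
  "orthonormal_basis b \<longleftrightarrow> (\<forall>i j. cinner (b i) (b j) = (if i = j then 1 else 0))"

end

theory Submission
  imports Defs
begin

lemma cscale_mult_left: "cscale c X ** Y = cscale c (X ** Y)"
  by (simp add: cscale_def matrix_matrix_mult_def vec_eq_iff sum_distrib_left mult.assoc)
lemma cscale_mult_right: "X ** cscale c Y = cscale c (X ** Y)"
  by (simp add: cscale_def matrix_matrix_mult_def vec_eq_iff sum_distrib_left mult.left_commute)
lemma cscale_cscale: "cscale c (cscale d X) = cscale (c*d) X"
  by (simp add: cscale_def vec_eq_iff mult.assoc)
lemma cscale_zero[simp]: "cscale 0 X = 0" "cscale c 0 = 0"
  by (simp_all add: cscale_def vec_eq_iff)
lemma cscale_add: "cscale c X + cscale d X = cscale (c+d) X"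
  by (simp add: cscale_def vec_eq_iff algebra_simps)
lemma cscale_diff: "cscale c X - cscale d X = cscale (c-d) X"
  by (simp add: cscale_def vec_eq_iff algebra_simps)
lemma cscale_sum: "(\<Sum>a\<in>A. cscale (f a) X) = cscale (\<Sum>a\<in>A. f a) X"
  by (simp add: cscale_def vec_eq_iff sum_distrib_right)
lemma mult_sum_left: "(\<Sum>k\<in>S. f k) ** Y = (\<Sum>k\<in>S. f k ** Y)"
  by (simp add: matrix_matrix_mult_def vec_eq_iff sum_distrib_right) (intro allI sum.swap)
lemma mult_sum_right: "Y ** (\<Sum>k\<in>S. f k) = (\<Sum>k\<in>S. Y ** f k)"
  by (simp add: matrix_matrix_mult_def vec_eq_iff sum_distrib_left) (intro allI sum.swap)
lemma ketbra_mult: "ketbra u v ** ketbra w x = cscale (cinner v w) (ketbra u x)"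
  by (simp add: ketbra_def cscale_def cinner_def matrix_matrix_mult_def vec_eq_iff sum_distrib_left sum_distrib_right mult_ac)
lemma cadj_ketbra: "cadj (ketbra u v) = ketbra v u"
  by (simp add: ketbra_def cadj_def vec_eq_iff)
lemma cadj_cscale: "cadj (cscale c X) = cscale (cnj c) (cadj X)"
  by (simp add: cscale_def cadj_def vec_eq_iff)
lemma cadj_sum: "cadj (\<Sum>k\<in>S. f k) = (\<Sum>k\<in>S. cadj (f k))"
  by (simp add: cadj_def vec_eq_iff)
lemma cadj_mult: "cadj (X ** Y) = cadj Y ** cadj X"
  by (simp add: cadj_def matrix_matrix_mult_def vec_eq_iff mult.commute)
lemma sandwich: "ketbra u u' ** X ** ketbra v' v = cscale (cinner u' (X *v v')) (ketbra u v)"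
  apply (simp add: ketbra_def cscale_def cinner_def matrix_matrix_mult_def matrix_vector_mult_def vec_eq_iff sum_distrib_left sum_distrib_right mult_ac)
  apply (intro allI)
  apply (subst sum.swap)
  apply (rule sum.cong, simp)
  apply (rule sum.cong, simp)
  apply (simp add: mult_ac)
  done

lemma onb_inner: "orthonormal_basis b \<Longrightarrow> cinner (b i) (b j) = (if i = j then 1 else 0)"
  by (simp add: orthonormal_basis_def)

lemma completeness:
  fixes b :: "'n::finite \<Rightarrow> complex^'n"
  assumes onb: "orthonormal_basis b"
  shows "(\<Sum>k\<in>UNIV. ketbra (b k) (b k)) = mat 1"
proof -
  define B :: "complex^'n^'n" where "B = (\<chi> i k. b k $ i)"
  have "cadj B ** B = mat 1"
    using onb by (simp add: B_def cadj_def matrix_matrix_mult_def mat_def vec_eq_iff orthonormal_basis_def cinner_def)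
  then have "B ** cadj B = mat 1" using matrix_left_right_inverse by blast
  then show ?thesis
    by (simp add: B_def cadj_def matrix_matrix_mult_def mat_def vec_eq_iff ketbra_def)
qed

lemma decomp:
  fixes b :: "'n::finite \<Rightarrow> complex^'n"
  assumes onb: "orthonormal_basis b"
  shows "X = (\<Sum>k\<in>UNIV. \<Sum>l\<in>UNIV. cscale (cinner (b k) (X *v b l)) (ketbra (b k) (b l)))"
proof -
  have "X = mat 1 ** X ** mat 1" by simp
  also have "\<dots> = (\<Sum>k\<in>UNIV. ketbra (b k) (b k)) ** X ** (\<Sum>l\<in>UNIV. ketbra (b l) (b l))"
    using completeness[OF onb] by simp
  also have "\<dots> = (\<Sum>k\<in>UNIV. \<Sum>l\<in>UNIV. ketbra (b k) (b k) ** X ** ketbra (b l) (b l))"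
    by (simp add: mult_sum_left mult_sum_right) (rule sum.swap)
  also have "\<dots> = (\<Sum>k\<in>UNIV. \<Sum>l\<in>UNIV. cscale (cinner (b k) (X *v b l)) (ketbra (b k) (b l)))"
    by (simp add: sandwich)
  finally show ?thesis .
qed

lemma diag_of:
  fixes b :: "'n::finite \<Rightarrow> complex^'n"
  assumes onb: "orthonormal_basis b"
    and off: "\<And>k l. k \<noteq> l \<Longrightarrow> cinner (b k) (X *v b l) = 0"
  shows "X = (\<Sum>k\<in>UNIV. cscale (cinner (b k) (X *v b k)) (ketbra (b k) (b k)))"
proof -
  have "X = (\<Sum>k\<in>UNIV. \<Sum>l\<in>UNIV. cscale (cinner (b k) (X *v b l)) (ketbra (b k) (b l)))"
    using decomp[OF onb] .
  also have "\<dots> = (\<Sum>k\<in>UNIV. \<Sum>l\<in>UNIV. if l = k then cscale (cinner (b k) (X *v b k)) (ketbra (b k) (b k)) else 0)"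
    by (intro sum.cong refl) (auto simp: off)
  also have "\<dots> = (\<Sum>k\<in>UNIV. cscale (cinner (b k) (X *v b k)) (ketbra (b k) (b k)))"
    by simp
  finally show ?thesis .
qed

lemma nonzero_vec:
  assumes "orthonormal_basis b" shows "\<exists>p. b k $ p \<noteq> 0"
proof (rule ccontr)
  assume "\<not> ?thesis"
  then have "cinner (b k) (b k) = 0" by (simp add: cinner_def)
  with onb_inner[OF assms, of k k] show False by simp
qed

lemma cscale_ketbra_zero:
  assumes onb: "orthonormal_basis b" and z: "cscale c (ketbra (b k) (b l)) = 0"
  shows "c = 0"
proof -
  obtain p where p: "b k $ p \<noteq> 0" using nonzero_vec[OF onb] by blast
  obtain q where q: "b l $ q \<noteq> 0" using nonzero_vec[OF onb] by blast
  have "c * (b k $ p * cnj (b l $ q)) = 0"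
    using z by (simp add: cscale_def ketbra_def vec_eq_iff) (metis mult.assoc)
  with p q show ?thesis by simp
qed

definition D :: "('n::finite \<Rightarrow> complex^'n) \<Rightarrow> ('n \<Rightarrow> complex) \<Rightarrow> complex^'n^'n" where
  "D b c = (\<Sum>k\<in>UNIV. cscale (c k) (ketbra (b k) (b k)))"

lemma D_left:
  assumes onb: "orthonormal_basis b"
  shows "D b c ** ketbra (b i) v = cscale (c i) (ketbra (b i) v)"
proof -
  have "D b c ** ketbra (b i) v = (\<Sum>k\<in>UNIV. if k = i then cscale (c i) (ketbra (b i) v) else 0)"
    unfolding D_def mult_sum_left
    by (intro sum.cong refl) (simp add: cscale_mult_left ketbra_mult onb_inner[OF onb] cscale_cscale)
  then show ?thesis by simp
qed

lemma D_right:
  assumes onb: "orthonormal_basis b"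
  shows "ketbra v (b j) ** D b c = cscale (c j) (ketbra v (b j))"
proof -
  have "ketbra v (b j) ** D b c = (\<Sum>k\<in>UNIV. if k = j then cscale (c j) (ketbra v (b j)) else 0)"
    unfolding D_def mult_sum_right
    by (intro sum.cong refl) (auto simp add: cscale_mult_right ketbra_mult onb_inner[OF onb] cscale_cscale)
  then show ?thesis by simp
qed

lemma D_adj: "cadj (D b c) = D b (\<lambda>k. cnj (c k))"
  by (simp add: D_def cadj_sum cadj_cscale cadj_ketbra)

lemma pos_sum_zero:
  assumes fin: "finite A" and z: "(\<Sum>a\<in>A. Y a ** cadj (Y a)) = (0::complex^'n::finite^'n)"
  shows "\<forall>a\<in>A. Y a = 0"
proof -
  { fix r
    have "complex_of_real (\<Sum>a\<in>A. \<Sum>s\<in>UNIV. (cmod (Y a $ r $ s))\<^sup>2) = (\<Sum>a\<in>A. Y a ** cadj (Y a)) $ r $ r"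
      by (simp add: complex_norm_square[symmetric] matrix_matrix_mult_def cadj_def del: of_real_power)
    also have "\<dots> = 0" using z by simp
    finally have "(\<Sum>a\<in>A. \<Sum>s\<in>UNIV. (cmod (Y a $ r $ s))\<^sup>2) = 0"
      using of_real_eq_0_iff by blast
    then have "\<forall>a\<in>A. \<forall>s. Y a $ r $ s = 0"
      using fin by (simp add: sum_nonneg_eq_0_iff sum_nonneg)
  }
  then show ?thesis by (simp add: vec_eq_iff)
qed


lemma mdistrib: "(A::complex^'n::finite^'n) ** (B + C) = A ** B + A ** C"
   "(B + C) ** A = B ** A + C ** A" "A ** (B - C) = A ** B - A ** C" "(B - C) ** A = B ** A - C ** A"
  by (simp_all add: matrix_matrix_mult_def vec_eq_iff algebra_simps sum.distrib sum_subtractf)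

lemma cscale_distrib: "cscale c (X + Y) = cscale c X + cscale c Y" "cscale c (X - Y) = cscale c X - cscale c Y"
  "cscale 1 X = X"
  by (simp_all add: cscale_def vec_eq_iff algebra_simps)

lemma ketbra_mult_assoc: "X ** ketbra u v ** ketbra w x = cscale (cinner v w) (X ** ketbra u x)"
  by (simp add: matrix_mul_assoc[symmetric] ketbra_mult cscale_mult_right)

lemma D_left_assoc: "orthonormal_basis b \<Longrightarrow> X ** D b c ** ketbra (b i) v = cscale (c i) (X ** ketbra (b i) v)"
  by (simp add: matrix_mul_assoc[symmetric] D_left cscale_mult_right)
lemma D_right_assoc: "orthonormal_basis b \<Longrightarrow> X ** ketbra v (b j) ** D b c = cscale (c j) (X ** ketbra v (b j))"
  by (simp add: matrix_mul_assoc[symmetric] D_right cscale_mult_right)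

lemma step1:
  fixes b :: "'n::finite \<Rightarrow> complex^'n"
  assumes onb: "orthonormal_basis b" and finA: "finite A" and ki: "k \<noteq> i"
    and z: "lindblad H A M (ketbra (b i) (b i)) = 0"
  shows "\<forall>a\<in>A. ketbra (b k) (b k) ** M a ** ketbra (b i) (b i) = 0"
proof -
  let ?Y = "\<lambda>a. ketbra (b k) (b k) ** M a ** ketbra (b i) (b i)"
  have "ketbra (b k) (b k) ** lindblad H A M (ketbra (b i) (b i)) ** ketbra (b k) (b k)
     = (\<Sum>a\<in>A. ?Y a ** cadj (?Y a))"
    using ki
    by (simp add: lindblad_def commutator_def anticommutator_def mdistrib cscale_distrib
        mult_sum_left mult_sum_right cscale_mult_left cscale_mult_right matrix_mul_assoc
        ketbra_mult ketbra_mult_assoc onb_inner[OF onb] cadj_mult cadj_ketbra)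
  then have "(\<Sum>a\<in>A. ?Y a ** cadj (?Y a)) = 0" using z by simp
  then show ?thesis by (rule pos_sum_zero[OF finA])
qed


lemma lindblad_diag:
  fixes b :: "'n::finite \<Rightarrow> complex^'n"
  assumes onb: "orthonormal_basis b" and Md: "\<forall>a\<in>A. M a = D b (nn a)" and Hd: "H = D b h"
  shows "lindblad H A M (ketbra (b i) (b j))
     = cscale (- \<i> * (h i - h j) + (\<Sum>a\<in>A. nn a i * cnj (nn a j) - (1/2) * (cnj (nn a i) * nn a i + cnj (nn a j) * nn a j))) (ketbra (b i) (b j))"
proof -
  have "lindblad H A M (ketbra (b i) (b j)) = cscale (- \<i>) (cscale (h i) (ketbra (b i) (b j)) - cscale (h j) (ketbra (b i) (b j)))
     + (\<Sum>a\<in>A. cscale (nn a i * cnj (nn a j)) (ketbra (b i) (b j))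
          - cscale (1/2) (cscale (cnj (nn a i) * nn a i) (ketbra (b i) (b j)) + cscale (cnj (nn a j) * nn a j) (ketbra (b i) (b j))))"
    unfolding lindblad_def commutator_def anticommutator_def Hd
    apply (simp add: D_left D_right onb)
    apply (rule sum.cong, simp)
    apply (simp add: Md D_adj D_left D_right onb D_left_assoc D_right_assoc cscale_mult_left cscale_mult_right cscale_cscale matrix_mul_assoc mult.commute)
    done
  also have "\<dots> = cscale (- \<i> * (h i - h j) + (\<Sum>a\<in>A. nn a i * cnj (nn a j) - (1/2) * (cnj (nn a i) * nn a i + cnj (nn a j) * nn a j))) (ketbra (b i) (b j))"
    by (simp only: cscale_add cscale_diff cscale_cscale cscale_sum)
  finally show ?thesis .
qed


theorem mainTheorem3:
  fixes b :: "'n::finite \<Rightarrow> complex^'n"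
    and H :: "complex^'n^'n"
    and A :: "'a set"
    and M :: "'a \<Rightarrow> complex^'n^'n"
  assumes onb: "orthonormal_basis b"
    and selfadj: "cadj H = H"
    and finA: "finite A"
    and fix_pops: "\<forall>i. lindblad H A M (ketbra (b i) (b i)) = 0"
  shows "(\<exists>h nn. H = (\<Sum>k\<in>UNIV. cscale (h k) (ketbra (b k) (b k)))
              \<and> (\<forall>a\<in>A. M a = (\<Sum>k\<in>UNIV. cscale (nn a k) (ketbra (b k) (b k)))))
       \<and> (\<forall>(h :: 'n \<Rightarrow> complex) (nn :: 'a \<Rightarrow> 'n \<Rightarrow> complex).
            H = (\<Sum>k\<in>UNIV. cscale (h k) (ketbra (b k) (b k)))
            \<and> (\<forall>a\<in>A. M a = (\<Sum>k\<in>UNIV. cscale (nn a k) (ketbra (b k) (b k))))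
            \<longrightarrow> (\<forall>i j. i \<noteq> j \<longrightarrow>
                  lindblad H A M (ketbra (b i) (b j))
                  = cscale (- ((1/2) * (\<Sum>a\<in>A. of_real ((cmod (nn a i))\<^sup>2) + of_real ((cmod (nn a j))\<^sup>2)
                                              - 2 * nn a i * cnj (nn a j))
                               + \<i> * (h i - h j)))
                      (ketbra (b i) (b j))))"
proof
  define nn where "nn a k = cinner (b k) (M a *v b k)" for a k
  have Md: "\<forall>a\<in>A. M a = D b (nn a)"
  proof
    fix a assume a: "a \<in> A"
    have "\<And>k l. k \<noteq> l \<Longrightarrow> cinner (b k) (M a *v b l) = 0"
    proof -
      fix k l :: 'n assume kl: "k \<noteq> l"
      have "ketbra (b k) (b k) ** M a ** ketbra (b l) (b l) = 0"
        using step1[OF onb finA kl fix_pops[rule_format, of l]] a by blast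
      then show "cinner (b k) (M a *v b l) = 0"
        by (simp add: sandwich cscale_ketbra_zero[OF onb])
    qed
    then show "M a = D b (nn a)" unfolding D_def nn_def by (rule diag_of[OF onb])
  qed
  have comm: "H ** ketbra (b i) (b i) = ketbra (b i) (b i) ** H" for i
  proof -
    have "lindblad H A M (ketbra (b i) (b i)) = cscale (- \<i>) (H ** ketbra (b i) (b i) - ketbra (b i) (b i) ** H)"
      unfolding lindblad_def commutator_def anticommutator_def
      apply (subst sum.neutral)
       apply (simp_all add: Md D_adj D_left D_right onb D_left_assoc D_right_assoc cscale_mult_left cscale_mult_right cscale_cscale matrix_mul_assoc mult.commute)
      apply (simp add: cscale_def vec_eq_iff)
      done
    then have "cscale (- \<i>) (H ** ketbra (b i) (b i) - ketbra (b i) (b i) ** H) = 0"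
      using fix_pops by simp
    then show ?thesis by (simp add: cscale_def vec_eq_iff)
  qed
  show "\<exists>h nn. H = (\<Sum>k\<in>UNIV. cscale (h k) (ketbra (b k) (b k)))
              \<and> (\<forall>a\<in>A. M a = (\<Sum>k\<in>UNIV. cscale (nn a k) (ketbra (b k) (b k))))"
  proof (intro exI conjI)
    have "\<And>k l. k \<noteq> l \<Longrightarrow> cinner (b k) (H *v b l) = 0"
    proof -
      fix k l :: 'n assume kl: "k \<noteq> l"
      have "ketbra (b k) (b k) ** H ** ketbra (b l) (b l) = ketbra (b k) (b k) ** (ketbra (b l) (b l) ** H)"
        by (simp add: matrix_mul_assoc[symmetric] comm)
      also have "\<dots> = 0" using kl by (simp add: matrix_mul_assoc ketbra_mult onb_inner[OF onb])
      finally show "cinner (b k) (H *v b l) = 0"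
        by (simp add: sandwich cscale_ketbra_zero[OF onb])
    qed
    then show "H = (\<Sum>k\<in>UNIV. cscale (cinner (b k) (H *v b k)) (ketbra (b k) (b k)))"
      by (rule diag_of[OF onb])
    show "\<forall>a\<in>A. M a = (\<Sum>k\<in>UNIV. cscale (nn a k) (ketbra (b k) (b k)))"
      using Md by (simp add: D_def)
  qed
next
  show "\<forall>(h :: 'n \<Rightarrow> complex) (nn :: 'a \<Rightarrow> 'n \<Rightarrow> complex).
            H = (\<Sum>k\<in>UNIV. cscale (h k) (ketbra (b k) (b k)))
            \<and> (\<forall>a\<in>A. M a = (\<Sum>k\<in>UNIV. cscale (nn a k) (ketbra (b k) (b k))))
            \<longrightarrow> (\<forall>i j. i \<noteq> j \<longrightarrow>
                  lindblad H A M (ketbra (b i) (b j))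
                  = cscale (- ((1/2) * (\<Sum>a\<in>A. of_real ((cmod (nn a i))\<^sup>2) + of_real ((cmod (nn a j))\<^sup>2)
                                              - 2 * nn a i * cnj (nn a j))
                               + \<i> * (h i - h j)))
                      (ketbra (b i) (b j)))"
  proof (intro allI impI)
    fix h :: "'n \<Rightarrow> complex" and nn :: "'a \<Rightarrow> 'n \<Rightarrow> complex" and i j
    assume as: "H = (\<Sum>k\<in>UNIV. cscale (h k) (ketbra (b k) (b k)))
            \<and> (\<forall>a\<in>A. M a = (\<Sum>k\<in>UNIV. cscale (nn a k) (ketbra (b k) (b k))))"
    then have Hd: "H = D b h" and Md: "\<forall>a\<in>A. M a = D b (nn a)" by (simp_all add: D_def)
    show "lindblad H A M (ketbra (b i) (b j))
                  = cscale (- ((1/2) * (\<Sum>a\<in>A. of_real ((cmod (nn a i))\<^sup>2) + of_real ((cmod (nn a j))\<^sup>2)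
                                              - 2 * nn a i * cnj (nn a j))
                               + \<i> * (h i - h j)))
                      (ketbra (b i) (b j))"
      unfolding lindblad_diag[OF onb Md Hd]
      by (simp del: of_real_power add: complex_norm_square algebra_simps sum_subtractf sum.distrib sum_distrib_left sum_divide_distrib)
  qed
qed

end
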